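(* Let $N_r\ge N_t\ge 2$, let $\mathbf{H}\in\mathbb{C}^{N_r\times N_t}$ have full column rank, let $\mathbf{H}=\mathbf{Q}\mathbf{L}$ be its thin QL decomposition, and let $\mathcal{X}\subset\mathbb{C}$ be a finite constellation. Fix $1\le\nu\le N_t-1$ and partition $$\mathbf{L}=\begin{bmatrix}\mathbf{P}&\mathbf{0}\\ \mathbf{R}&\mathbf{S}\end{bmatrix},$$ with $\mathbf{P}\in\mathbb{C}^{\nu\times\nu}$ and $\mathbf{S}\in\mathbb{C}^{(N_t-\nu)\times(N_t-\nu)}$. Define $$\boldsymbol{\Sigma}=\operatorname{diag}(\mathbf{S}^{-1}\mathbf{S}^{-\dagger})^{-1/2},\qquad \mathbf{W}_{\mathrm p}=\begin{bmatrix}\mathbf{I}_\nu&\mathbf{0}\\ \mathbf{0}&\boldsymbol{\Sigma}\mathbf{S}^{-1}\end{bmatrix}.$$ For $\mathbf{y}\in\mathbb{C}^{N_r}$ let $\tilde{\mathbf{y}}=\mathbf{Q}^\dagger\mathbf{y}$, and define $$\mathbf{x}_{\mathrm{ML}}=\arg\min_{\mathbf{x}\in\mathcal{X}^{N_t}}\|\tilde{\mathbf{y}}-\mathbf{L}\mathbf{x}\|,\qquad \mathbf{x}_{\mathrm{WLD}}=\arg\min_{\mathbf{x}\in\mathcal{X}^{N_t}}\|\mathbf{W}_{\mathrm p}(\tilde{\mathbf{y}}-\mathbf{L}\mathbf{x})\|.$$ Then $$\|\tilde{\mathbf{y}}-\mathbf{L}\mathbf{x}_{\mathrm{ML}}\|\le\|\tilde{\mathbf{y}}-\mathbf{L}\mathbf{x}_{\mathrm{WLD}}\|\le\kappa(\mathbf{W}_{\mathrm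 p})\,\|\tilde{\mathbf{y}}-\mathbf{L}\mathbf{x}_{\mathrm{ML}}\|$$ and $$\|\mathbf{W}_{\mathrm p}(\tilde{\mathbf{y}}-\mathbf{L}\mathbf{x}_{\mathrm{WLD}})\|\le\sigma_{\max}(\mathbf{W}_{\mathrm p})\,\|\tilde{\mathbf{y}}-\mathbf{L}\mathbf{x}_{\mathrm{ML}}\|,$$ where $\kappa(\mathbf{W}_{\mathrm p})=\sigma_{\max}(\mathbf{W}_{\mathrm p})/\sigma_{\min}(\mathbf{W}_{\mathrm p})$, and $\sigma_{\max}(\mathbf{W}_{\mathrm p}),\sigma_{\min}(\mathbf{W}_{\mathrm p})$ are the largest and smallest singular values of $\mathbf{W}_{\mathrm p}$.
   Context: The thin QL decomposition $\mathbf{H}=\mathbf{Q}\mathbf{L}$ means that $\mathbf{Q}\in\mathbb{C}^{N_r\times N_t}$ has orthonormal columns and $\mathbf{L}\in\mathbb{C}^{N_t\times N_t}$ is lower triangular with real positive diagonal entries. For a square matrix $\mathbf{A}$, $\operatorname{diag}(\mathbf{A})$ denotes the diagonal matrix having the same diagonal entries as $\mathbf{A}$. The superscript $\dagger$ denotes conjugate transpose, and $\|\cdot\|$ is the Euclidean norm. The argmins denote any minimizer. *)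

theory Defs
  imports Complex_Main "Jordan_Normal_Form.Schur_Decomposition" "Jordan_Normal_Form.DL_Rank"
begin

definition cvnorm :: "complex vec \<Rightarrow> real" where
  "cvnorm v = sqrt (\<Sum>i<dim_vec v. (cmod (v $ i))\<^sup>2)"

definition mat_inv :: "complex mat \<Rightarrow> complex mat" where
  "mat_inv A = (SOME B. B \<in> carrier_mat (dim_row A) (dim_row A) \<and>
       A * B = 1\<^sub>m (dim_row A) \<and> B * A = 1\<^sub>m (dim_row A))"

definition singular_values :: "complex mat \<Rightarrow> real set" where
  "singular_values A = {sqrt (Re k) | k. eigenvalue (mat_adjoint A * A) k}"

definition sigma_max :: "complex mat \<Rightarrow> real" where
  "sigma_max A = Max (singular_values A)"

definition sigma_min :: "complex mat \<Rightarrow> real" where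
  "sigma_min A = Min (singular_values A)"

definition cond_num :: "complex mat \<Rightarrow> real" where
  "cond_num A = sigma_max A / sigma_min A"

definition const_vecs :: "complex set \<Rightarrow> nat \<Rightarrow> complex vec set" where
  "const_vecs X n = {x \<in> carrier_vec n. \<forall>i<n. x $ i \<in> X}"

definition Sigma_mat :: "complex mat \<Rightarrow> complex mat" where
  "Sigma_mat S = mat_diag (dim_row S) (\<lambda>i. complex_of_real
     (1 / sqrt (Re ((mat_inv S * mat_adjoint (mat_inv S)) $$ (i, i)))))"

definition W_p :: "nat \<Rightarrow> complex mat \<Rightarrow> complex mat" where
  "W_p nu S = four_block_mat (1\<^sub>m nu) (0\<^sub>m nu (dim_row S)) (0\<^sub>m (dim_row S) nu)
                 (Sigma_mat S * mat_inv S)"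

end

theory Submission
  imports Defs "Jordan_Normal_Form.Spectral_Radius"
begin

lemma adj_carrier[simp]: "A \<in> carrier_mat n m \<Longrightarrow> mat_adjoint A \<in> carrier_mat m n"
  unfolding mat_adjoint_def by auto
lemma adj_dims[simp]: "dim_row (mat_adjoint A) = dim_col A" "dim_col (mat_adjoint A) = dim_row A"
  unfolding mat_adjoint_def by auto
lemma adj_index[simp]: "i < dim_col A \<Longrightarrow> j < dim_row A \<Longrightarrow> mat_adjoint A $$ (i,j) = cnj (A $$ (j,i))"
  unfolding mat_adjoint_def by (auto simp: mat_of_rows_def)

lemma cscalar_adj:
  fixes B :: "complex mat"
  assumes B: "B \<in> carrier_mat n k" and v: "v \<in> carrier_vec n" and w: "w \<in> carrier_vec k"
  shows "v \<bullet>c (B *\<^sub>v w) = (mat_adjoint B *\<^sub>v v) \<bullet>c w"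
proof -
  have "v \<bullet>c (B *\<^sub>v w) = (\<Sum>i<n. v $ i * cnj (\<Sum>j<k. B $$ (i,j) * w $ j))"
    using B v w by (simp add: scalar_prod_def row_def atLeast0LessThan)
  also have "\<dots> = (\<Sum>i<n. \<Sum>j<k. v $ i * cnj (B $$ (i,j)) * cnj (w $ j))"
    by (simp add: sum_distrib_left mult.assoc)
  also have "\<dots> = (\<Sum>j<k. \<Sum>i<n. v $ i * cnj (B $$ (i,j)) * cnj (w $ j))"
    by (rule sum.swap)
  also have "\<dots> = (\<Sum>j<k. (\<Sum>i<n. cnj (B $$ (i,j)) * v $ i) * cnj (w $ j))"
    by (simp add: sum_distrib_right sum_distrib_left mult_ac)
  also have "\<dots> = (mat_adjoint B *\<^sub>v v) \<bullet>c w"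
    using B v w by (simp add: scalar_prod_def row_def atLeast0LessThan)
  finally show ?thesis .
qed

lemma cnorm_sq: fixes v :: "complex vec"
  shows "v \<bullet>c v = of_real (\<Sum>i<dim_vec v. (cmod (v $ i))\<^sup>2)"
proof -
  have "v \<bullet>c v = (\<Sum>i<dim_vec v. v $ i * cnj (v $ i))"
    by (simp add: scalar_prod_def atLeast0LessThan)
  also have "\<dots> = (\<Sum>i<dim_vec v. of_real ((cmod (v $ i))\<^sup>2))"
    by (rule sum.cong, simp, rule complex_norm_square[symmetric])
  finally show ?thesis by simp
qed

lemma cvnorm_alt: "cvnorm v = sqrt (Re (v \<bullet>c v))"
  unfolding cvnorm_def cnorm_sq by simp

lemma adj_mult_index:
  fixes U B :: "complex mat"
  assumes U: "U \<in> carrier_mat n k" and B: "B \<in> carrier_mat n l" and i: "i < k" and j: "j < l"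
  shows "(mat_adjoint U * B) $$ (i,j) = col B j \<bullet>c col U i"
  using U B i j by (simp add: scalar_prod_def row_def mult.commute)

lemma cscalar_smult_both:
  fixes v w :: "complex vec"
  assumes "v \<in> carrier_vec n" "w \<in> carrier_vec n"
  shows "(a \<cdot>\<^sub>v v) \<bullet>c (b \<cdot>\<^sub>v w) = a * cnj b * (v \<bullet>c w)"
  using assms by (simp add: conjugate_smult_vec)

definition ortho :: "nat \<Rightarrow> complex vec list \<Rightarrow> bool" where
  "ortho n bs \<longleftrightarrow> set bs \<subseteq> carrier_vec n \<and>
     (\<forall>i<length bs. \<forall>j<length bs. bs ! j \<bullet>c bs ! i = (if i = j then 1 else 0))"

lemma ortho_unitary:
  assumes o: "ortho n bs" and len: "length bs = n"
  defines "U \<equiv> mat_of_cols n bs"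
  shows "mat_adjoint U * U = 1\<^sub>m n" "U * mat_adjoint U = 1\<^sub>m n"
proof -
  have U: "U \<in> carrier_mat n n" unfolding U_def using len by auto
  show 1: "mat_adjoint U * U = 1\<^sub>m n"
  proof (rule eq_matI)
    fix i j assume i: "i < dim_row (1\<^sub>m n)" and j: "j < dim_col (1\<^sub>m n)"
    have "(mat_adjoint U * U) $$ (i,j) = col U j \<bullet>c col U i"
      using adj_mult_index[OF U U] i j by auto
    also have "\<dots> = bs ! j \<bullet>c bs ! i" using i j o len unfolding U_def ortho_def
      by (subst (1 2) col_mat_of_cols, auto)
    also have "\<dots> = 1\<^sub>m n $$ (i,j)" using i j o len unfolding ortho_def by auto
    finally show "(mat_adjoint U * U) $$ (i,j) = 1\<^sub>m n $$ (i,j)" .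
  qed (use U in auto)
  show "U * mat_adjoint U = 1\<^sub>m n"
    by (rule mat_mult_left_right_inverse[OF _ U 1], use U in auto)
qed

lemma block_quad:
  fixes A :: "complex mat"
  assumes A: "A \<in> carrier_mat (Suc m) (Suc m)"
    and r0: "\<forall>j<m. A $$ (0, Suc j) = 0" and c0: "\<forall>i<m. A $$ (Suc i, 0) = 0"
    and x: "x \<in> carrier_vec (Suc m)"
  shows "(A *\<^sub>v x) \<bullet>c x = A $$ (0,0) * x $ 0 * cnj (x $ 0) +
     (mat m m (\<lambda>(i,j). A $$ (Suc i, Suc j)) *\<^sub>v vec m (\<lambda>i. x $ Suc i)) \<bullet>c vec m (\<lambda>i. x $ Suc i)"
  using A r0 c0 x by (simp add: scalar_prod_def row_def atLeast0LessThan sum.lessThan_Suc_shift del: sum.lessThan_Suc)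

lemma block_norm:
  fixes x :: "complex vec"
  assumes x: "x \<in> carrier_vec (Suc m)"
  shows "x \<bullet>c x = x $ 0 * cnj (x $ 0) + vec m (\<lambda>i. x $ Suc i) \<bullet>c vec m (\<lambda>i. x $ Suc i)"
  using x by (simp add: scalar_prod_def atLeast0LessThan sum.lessThan_Suc_shift del: sum.lessThan_Suc)

lemma block_ev:
  fixes A :: "complex mat"
  assumes A: "A \<in> carrier_mat (Suc m) (Suc m)"
    and r0: "\<forall>j<m. A $$ (0, Suc j) = 0"
    and x: "x \<in> carrier_vec m"
    and ev: "mat m m (\<lambda>(i,j). A $$ (Suc i, Suc j)) *\<^sub>v x = \<mu> \<cdot>\<^sub>v x"
  shows "A *\<^sub>v vec (Suc m) (\<lambda>k. if k = 0 then 0 else x $ (k - 1))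
         = \<mu> \<cdot>\<^sub>v vec (Suc m) (\<lambda>k. if k = 0 then 0 else x $ (k - 1))"
proof (rule eq_vecI)
  fix i assume "i < dim_vec (\<mu> \<cdot>\<^sub>v vec (Suc m) (\<lambda>k. if k = 0 then 0 else x $ (k - 1)))"
  hence i: "i < Suc m" by simp
  show "(A *\<^sub>v vec (Suc m) (\<lambda>k. if k = 0 then 0 else x $ (k - 1))) $ i =
    (\<mu> \<cdot>\<^sub>v vec (Suc m) (\<lambda>k. if k = 0 then 0 else x $ (k - 1))) $ i"
  proof (cases i)
    case 0
    then show ?thesis using A r0 x by (simp add: scalar_prod_def row_def atLeast0LessThan sum.lessThan_Suc_shift del: sum.lessThan_Suc)
  next
    case (Suc i')
    have "(mat m m (\<lambda>(i,j). A $$ (Suc i, Suc j)) *\<^sub>v x) $ i' = (\<mu> \<cdot>\<^sub>v x) $ i'" using ev by simp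
    then show ?thesis using A x i Suc by (simp add: scalar_prod_def row_def atLeast0LessThan sum.lessThan_Suc_shift del: sum.lessThan_Suc)
  qed
qed (use A in auto)

lemma cscalar_self_real:
  fixes w :: "complex vec"
  shows "w \<bullet>c w = of_real (Re (w \<bullet>c w))" "Re (w \<bullet>c w) \<ge> 0"
  by (subst (1 2) cnorm_sq, simp, subst cnorm_sq, simp add: sum_nonneg)

lemma onb_ev:
  fixes M :: "complex mat"
  assumes M: "M \<in> carrier_mat n n" and ev: "eigenvector M u e"
  shows "\<exists>bs. ortho n bs \<and> length bs = n \<and> M *\<^sub>v (bs ! 0) = e \<cdot>\<^sub>v (bs ! 0)"
proof -
  from ev M have u: "u \<in> carrier_vec n" and u0: "u \<noteq> 0\<^sub>v n" and Mu: "M *\<^sub>v u = e \<cdot>\<^sub>v u"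
    unfolding eigenvector_def by auto
  interpret cof_vec_space n "TYPE(complex)" .
  define b where "b = basis_completion u"
  note bc = basis_completion[OF u u0, folded b_def]
  have n0: "n \<noteq> 0" using u u0 by (metis carrier_vecD eq_vecI less_nat_zero_code index_zero_vec(2))
  from bc have "b \<noteq> []" using n0 by auto
  then obtain rest where brest: "b = u # rest" using bc(7) by (cases b, auto)
  define ws where "ws = gram_schmidt n b"
  note gs = gram_schmidt_result[OF bc(2) bc(4) bc(5) ws_def]
  have hd: "ws ! 0 = u" unfolding ws_def brest using gram_schmidt_hd[OF u, of rest]
    by (metis gs(4)[unfolded ws_def] brest hd_conv_nth length_0_conv list.distinct(1))
  have lenws: "length ws = n" using gs bc by auto
  define c where "c = (\<lambda>w :: complex vec. complex_of_real (1 / sqrt (Re (w \<bullet>c w))))"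
  define bs where "bs = map (\<lambda>w. c w \<cdot>\<^sub>v w) ws"
  have wsc: "\<And>i. i < n \<Longrightarrow> ws ! i \<in> carrier_vec n" using gs(3) lenws by auto
  have len: "length bs = n" unfolding bs_def using lenws by simp
  have orth: "ortho n bs" unfolding ortho_def
  proof (intro conjI allI impI)
    show "set bs \<subseteq> carrier_vec n" unfolding bs_def using gs(3) by auto
    fix i j assume i: "i < length bs" and j: "j < length bs"
    hence i': "i < n" and j': "j < n" using len by auto
    have "bs ! j \<bullet>c bs ! i = c (ws ! j) * cnj (c (ws ! i)) * (ws ! j \<bullet>c ws ! i)"
      unfolding bs_def using i' j' lenws wsc by (simp add: cscalar_smult_both[OF wsc wsc])
    also have "\<dots> = (if i = j then 1 else 0)"
    proof (cases "i = j")
      case True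
      define r where "r = Re (ws ! i \<bullet>c ws ! i)"
      have wr: "ws ! i \<bullet>c ws ! i = of_real r" using cscalar_self_real r_def by auto
      have "ws ! i \<bullet>c ws ! i \<noteq> 0" using corthogonalD[OF gs(2), of i i] i' lenws by auto
      hence "r \<noteq> 0" using wr by auto
      moreover have "r \<ge> 0" using cscalar_self_real r_def by auto
      ultimately have r0: "r > 0" by auto
      have cw: "c (ws ! i) = of_real (1 / sqrt r)" unfolding c_def r_def by simp
      have "c (ws ! j) * cnj (c (ws ! i)) * (ws ! j \<bullet>c ws ! i) = of_real (1 / sqrt r * (1 / sqrt r) * r)"
        unfolding True[symmetric] by (simp only: wr cw complex_cnj_complex_of_real of_real_mult)
      also have "1 / sqrt r * (1 / sqrt r) * r = 1" using r0
        by (simp add: field_simps)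
      finally show ?thesis using True by simp
    next
      case False
      have "ws ! j \<bullet>c ws ! i = 0" using corthogonalD[OF gs(2), of j i] i' j' lenws False by auto
      then show ?thesis using False by simp
    qed
    finally show "bs ! j \<bullet>c bs ! i = (if i = j then 1 else 0)" .
  qed
  have b0: "bs ! 0 = c u \<cdot>\<^sub>v u" unfolding bs_def using hd n0 lenws by simp
  have "M *\<^sub>v (bs ! 0) = e \<cdot>\<^sub>v (bs ! 0)"
    unfolding b0 using M u Mu by (simp add: mult_mat_vec smult_smult_assoc mult.commute)
  with orth len show ?thesis by blast
qed

lemma cscalar_cnj:
  fixes x y :: "complex vec"
  assumes "x \<in> carrier_vec n" "y \<in> carrier_vec n"
  shows "cnj (x \<bullet>c y) = y \<bullet>c x"
  using assms by (simp add: scalar_prod_def mult.commute)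

lemma rayleigh:
  fixes M :: "complex mat"
  assumes "M \<in> carrier_mat n n" "mat_adjoint M = M" "0 < n" "v \<in> carrier_vec n"
  shows "\<exists>a b. eigenvalue M a \<and> eigenvalue M b \<and>
     Re a * Re (v \<bullet>c v) \<le> Re ((M *\<^sub>v v) \<bullet>c v) \<and> Re ((M *\<^sub>v v) \<bullet>c v) \<le> Re b * Re (v \<bullet>c v)"
  using assms
proof (induction n arbitrary: M v)
  case 0 thus ?case by simp
next
  case (Suc m M v)
  note M = Suc.prems(1) and herm = Suc.prems(2) and v = Suc.prems(4)
  let ?n = "Suc m"
  obtain e where e: "eigenvalue M e" using spectrum_non_empty[OF M] unfolding spectrum_def by auto
  then obtain u where "eigenvector M u e" unfolding eigenvalue_def by auto
  from onb_ev[OF M this] obtain bs where o: "ortho ?n bs" and len: "length bs = ?n"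
    and Mb0: "M *\<^sub>v (bs ! 0) = e \<cdot>\<^sub>v (bs ! 0)" by auto
  define U where "U = mat_of_cols ?n bs"
  have U: "U \<in> carrier_mat ?n ?n" using len U_def by auto
  have Uh: "mat_adjoint U \<in> carrier_mat ?n ?n" using U by simp
  note uni = ortho_unitary[OF o len, folded U_def]
  have bsc: "\<And>i. i < ?n \<Longrightarrow> bs ! i \<in> carrier_vec ?n" using o len unfolding ortho_def by auto
  have colU: "\<And>i. i < ?n \<Longrightarrow> col U i = bs ! i" unfolding U_def using bsc len by simp
  have orthbs: "\<And>i j. i < ?n \<Longrightarrow> j < ?n \<Longrightarrow> bs ! j \<bullet>c bs ! i = (if i = j then 1 else 0)"
    using o len unfolding ortho_def by auto
  define A where "A = mat_adjoint U * (M * U)"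
  have A: "A \<in> carrier_mat ?n ?n" unfolding A_def using U M by auto
  have Aij: "A $$ (i,j) = (M *\<^sub>v bs ! j) \<bullet>c bs ! i" if "i < ?n" "j < ?n" for i j
  proof -
    have "A $$ (i,j) = col (M * U) j \<bullet>c col U i"
      unfolding A_def using adj_mult_index[OF U, of "M*U" ?n i j] U M that by auto
    also have "\<dots> = (M *\<^sub>v bs ! j) \<bullet>c bs ! i"
      by (simp only: col_mult2[OF M U that(2)] colU that)
    finally show ?thesis .
  qed
  have herm_sym: "(M *\<^sub>v x) \<bullet>c y = x \<bullet>c (M *\<^sub>v y)" if "x \<in> carrier_vec ?n" "y \<in> carrier_vec ?n" for x y
    using cscalar_adj[OF M that] herm by simp
  have A00: "A $$ (0,0) = e" using Aij[of 0 0] Mb0 bsc[of 0] orthbs[of 0 0] by simp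
  have r0: "\<forall>j<m. A $$ (0, Suc j) = 0"
  proof (intro allI impI)
    fix j assume j: "j < m"
    have "A $$ (0, Suc j) = bs ! Suc j \<bullet>c (M *\<^sub>v bs ! 0)"
      using Aij[of 0 "Suc j"] herm_sym[OF bsc bsc] j by simp
    also have "\<dots> = cnj e * (bs ! Suc j \<bullet>c bs ! 0)" unfolding Mb0 using bsc[of 0] bsc[of "Suc j"] j
      by (simp add: conjugate_smult_vec)
    also have "\<dots> = 0" using orthbs[of 0 "Suc j"] j by simp
    finally show "A $$ (0, Suc j) = 0" .
  qed
  have c0: "\<forall>i<m. A $$ (Suc i, 0) = 0"
  proof (intro allI impI)
    fix i assume i: "i < m"
    show "A $$ (Suc i, 0) = 0"
      using Aij[of "Suc i" 0] i Mb0 bsc[of 0] bsc[of "Suc i"] orthbs[of "Suc i" 0] by simp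
  qed
  define M' where "M' = mat m m (\<lambda>(i,j). A $$ (Suc i, Suc j))"
  have M': "M' \<in> carrier_mat m m" unfolding M'_def by simp
  have herm': "mat_adjoint M' = M'"
  proof (rule eq_matI)
    fix i j assume "i < dim_row M'" "j < dim_col M'"
    hence i: "i < m" and j: "j < m" using M' by auto
    have "mat_adjoint M' $$ (i,j) = cnj ((M *\<^sub>v bs ! Suc i) \<bullet>c bs ! Suc j)"
      using i j M' Aij[of "Suc j" "Suc i"] unfolding M'_def by simp
    also have "\<dots> = bs ! Suc j \<bullet>c (M *\<^sub>v bs ! Suc i)"
      by (rule cscalar_cnj[of _ ?n], use M bsc i j in auto)
    also have "\<dots> = M' $$ (i,j)" using i j Aij[of "Suc i" "Suc j"] herm_sym[OF bsc bsc, of "Suc j" "Suc i"]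
      unfolding M'_def by simp
    finally show "mat_adjoint M' $$ (i,j) = M' $$ (i,j)" .
  qed (use M' in auto)
  have UUv: "U *\<^sub>v (mat_adjoint U *\<^sub>v w) = w" if "w \<in> carrier_vec ?n" for w
  proof -
    have "U *\<^sub>v (mat_adjoint U *\<^sub>v w) = (U * mat_adjoint U) *\<^sub>v w"
      using U that by (subst assoc_mult_mat_vec[of _ ?n ?n _ ?n], auto)
    also have "\<dots> = w" using uni that by simp
    finally show ?thesis .
  qed
  have AU: "mat_adjoint U *\<^sub>v (M *\<^sub>v (U *\<^sub>v w)) = A *\<^sub>v w" if "w \<in> carrier_vec ?n" for w
    unfolding A_def using U M that by (simp add: assoc_mult_mat_vec[of _ ?n ?n _ ?n])
  have lift: "eigenvalue M \<mu>" if "eigenvalue M' \<mu>" for \<mu>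
  proof -
    from that obtain x' where ev': "eigenvector M' x' \<mu>" unfolding eigenvalue_def by auto
    hence x': "x' \<in> carrier_vec m" and x'0: "x' \<noteq> 0\<^sub>v m" and Mx': "M' *\<^sub>v x' = \<mu> \<cdot>\<^sub>v x'"
      using M' unfolding eigenvector_def by auto
    define y where "y = vec ?n (\<lambda>k. if k = 0 then 0 else x' $ (k - 1))"
    have y: "y \<in> carrier_vec ?n" unfolding y_def by simp
    have Ay: "A *\<^sub>v y = \<mu> \<cdot>\<^sub>v y" unfolding y_def
      by (rule block_ev[OF A r0 x' Mx'[unfolded M'_def]])
    have y0: "y \<noteq> 0\<^sub>v ?n"
    proof
      assume "y = 0\<^sub>v ?n"
      hence yz: "\<And>i. i < ?n \<Longrightarrow> y $ i = 0" by simp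
      have "x' = 0\<^sub>v m"
      proof (rule eq_vecI)
        fix i assume "i < dim_vec (0\<^sub>v m :: complex vec)"
        hence i: "i < m" by simp
        have "y $ Suc i = x' $ i" unfolding y_def using i by simp
        thus "x' $ i = 0\<^sub>v m $ i" using yz[of "Suc i"] i by simp
      qed (use x' in simp)
      with x'0 show False by simp
    qed
    define z where "z = U *\<^sub>v y"
    have z: "z \<in> carrier_vec ?n" unfolding z_def using U y by simp
    have "mat_adjoint U *\<^sub>v z = y" unfolding z_def using U y uni
      by (simp add: assoc_mult_mat_vec[of _ ?n ?n _ ?n, symmetric])
    hence z0: "z \<noteq> 0\<^sub>v ?n" using y0 U by auto
    have "M *\<^sub>v z = U *\<^sub>v (mat_adjoint U *\<^sub>v (M *\<^sub>v z))" using UUv M z by simp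
    also have "\<dots> = U *\<^sub>v (A *\<^sub>v y)" unfolding z_def using AU[OF y] by simp
    also have "\<dots> = \<mu> \<cdot>\<^sub>v z" unfolding Ay z_def using U y by (simp add: mult_mat_vec)
    finally have "eigenvector M z \<mu>" unfolding eigenvector_def using z z0 M by auto
    thus ?thesis unfolding eigenvalue_def by auto
  qed
  define x where "x = mat_adjoint U *\<^sub>v v"
  have x: "x \<in> carrier_vec ?n" unfolding x_def using Uh v by simp
  have vx: "v = U *\<^sub>v x" unfolding x_def using UUv v by simp
  have q: "(M *\<^sub>v v) \<bullet>c v = (A *\<^sub>v x) \<bullet>c x"
  proof -
    have "(M *\<^sub>v v) \<bullet>c v = (M *\<^sub>v (U *\<^sub>v x)) \<bullet>c (U *\<^sub>v x)" using vx by simp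
    also have "\<dots> = (mat_adjoint U *\<^sub>v (M *\<^sub>v (U *\<^sub>v x))) \<bullet>c x"
      by (rule cscalar_adj[OF U], use M U x in auto)
    also have "\<dots> = (A *\<^sub>v x) \<bullet>c x" using AU[OF x] by simp
    finally show ?thesis .
  qed
  have nn: "v \<bullet>c v = x \<bullet>c x"
  proof -
    have "v \<bullet>c v = (U *\<^sub>v x) \<bullet>c (U *\<^sub>v x)" using vx by simp
    also have "\<dots> = (mat_adjoint U *\<^sub>v (U *\<^sub>v x)) \<bullet>c x"
      by (rule cscalar_adj[OF U], use U x in auto)
    also have "\<dots> = x \<bullet>c x" using U x uni by (simp add: assoc_mult_mat_vec[of _ ?n ?n _ ?n, symmetric])
    finally show ?thesis .
  qed
  define x' where "x' = vec m (\<lambda>i. x $ Suc i)"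
  have x': "x' \<in> carrier_vec m" unfolding x'_def by simp
  have q2: "(M *\<^sub>v v) \<bullet>c v = e * (x $ 0 * cnj (x $ 0)) + (M' *\<^sub>v x') \<bullet>c x'"
    unfolding q using block_quad[OF A r0 c0 x] A00 unfolding M'_def x'_def by (simp add: mult.assoc)
  have n2: "v \<bullet>c v = x $ 0 * cnj (x $ 0) + x' \<bullet>c x'"
    unfolding nn using block_norm[OF x] unfolding x'_def by simp
  define p where "p = (cmod (x $ 0))\<^sup>2"
  have px: "x $ 0 * cnj (x $ 0) = of_real p" unfolding p_def by (rule complex_norm_square[symmetric])
  have p0: "p \<ge> 0" unfolding p_def by simp
  define r where "r = Re (x' \<bullet>c x')"
  have r0': "r \<ge> 0" unfolding r_def using cscalar_self_real by auto
  define Q where "Q = Re ((M' *\<^sub>v x') \<bullet>c x')"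
  have Qv: "Re ((M *\<^sub>v v) \<bullet>c v) = Re e * p + Q" unfolding q2 px Q_def by simp
  have Nv: "Re (v \<bullet>c v) = p + r" unfolding n2 px r_def by simp
  show ?case
  proof (cases "m = 0")
    case True
    have "Q = 0" "r = 0" unfolding Q_def r_def using True x' M' by (auto simp: scalar_prod_def)
    thus ?thesis unfolding Qv Nv using e by auto
  next
    case False
    from Suc.IH[OF M' herm' _ x'] False obtain a' b' where
      ev: "eigenvalue M' a'" "eigenvalue M' b'" and
      lo: "Re a' * r \<le> Q" and hi: "Q \<le> Re b' * r" unfolding Q_def r_def by auto
    define a where "a = (if Re e \<le> Re a' then e else a')"
    define b where "b = (if Re b' \<le> Re e then e else b')"
    have "eigenvalue M a" "eigenvalue M b" unfolding a_def b_def using e lift ev by auto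
    moreover have "Re a * (p + r) \<le> Re e * p + Q"
    proof (cases "Re e \<le> Re a'")
      case True
      have "Re e * r \<le> Re a' * r" using True r0' by (rule mult_right_mono)
      then show ?thesis unfolding a_def using True lo by (simp add: algebra_simps)
    next
      case False
      have "Re a' * p \<le> Re e * p" using False p0 by (intro mult_right_mono, auto)
      then show ?thesis unfolding a_def using False lo by (simp add: algebra_simps)
    qed
    moreover have "Re e * p + Q \<le> Re b * (p + r)"
    proof (cases "Re b' \<le> Re e")
      case True
      have "Re b' * r \<le> Re e * r" using True r0' by (rule mult_right_mono)
      then show ?thesis unfolding b_def using True hi by (simp add: algebra_simps)
    next
      case False
      have "Re e * p \<le> Re b' * p" using False p0 by (intro mult_right_mono, auto)
      then show ?thesis unfolding b_def using False hi by (simp add: algebra_simps)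
    qed
    ultimately show ?thesis unfolding Qv Nv by blast
  qed
qed

lemma cscalar_pos:
  fixes w :: "complex vec"
  assumes w: "w \<in> carrier_vec n" and w0: "w \<noteq> 0\<^sub>v n"
  shows "Re (w \<bullet>c w) > 0"
proof (rule ccontr)
  assume "\<not> Re (w \<bullet>c w) > 0"
  have e: "Re (w \<bullet>c w) = (\<Sum>i<dim_vec w. (cmod (w $ i))\<^sup>2)" by (subst cnorm_sq, simp)
  have "(\<Sum>i<dim_vec w. (cmod (w $ i))\<^sup>2) \<ge> 0" by (simp add: sum_nonneg)
  hence "(\<Sum>i<dim_vec w. (cmod (w $ i))\<^sup>2) = 0"
    using \<open>\<not> Re (w \<bullet>c w) > 0\<close> e by linarith
  hence "\<forall>i\<in>{..<dim_vec w}. (cmod (w $ i))\<^sup>2 = 0"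
    by (subst (asm) sum_nonneg_eq_0_iff, auto)
  hence "w = 0\<^sub>v n" using w by (intro eq_vecI, auto)
  with w0 show False by simp
qed

lemma sv_bounds:
  fixes W :: "complex mat"
  assumes W: "W \<in> carrier_mat n n" and n: "0 < n"
    and inj: "\<forall>x\<in>carrier_vec n. W *\<^sub>v x = 0\<^sub>v n \<longrightarrow> x = 0\<^sub>v n"
    and v: "v \<in> carrier_vec n"
  shows "cvnorm (W *\<^sub>v v) \<le> sigma_max W * cvnorm v"
    "sigma_min W * cvnorm v \<le> cvnorm (W *\<^sub>v v)" "sigma_min W > 0"
proof -
  define M where "M = mat_adjoint W * W"
  have Wh: "mat_adjoint W \<in> carrier_mat n n" using W by simp
  have M: "M \<in> carrier_mat n n" unfolding M_def by (rule mult_carrier_mat[OF Wh W])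
  have herm: "mat_adjoint M = M"
  proof (rule eq_matI)
    fix i j assume "i < dim_row M" "j < dim_col M"
    hence i: "i < n" and j: "j < n" using M by auto
    have Mji: "M $$ (j,i) = col W i \<bullet>c col W j"
      using adj_mult_index[OF W W j i] i j unfolding M_def by simp
    have "mat_adjoint M $$ (i,j) = cnj (col W i \<bullet>c col W j)" using M i j Mji by simp
    also have "\<dots> = col W j \<bullet>c col W i" by (rule cscalar_cnj[of _ n], use W i j in auto)
    also have "\<dots> = M $$ (i,j)" using adj_mult_index[OF W W i j] unfolding M_def by simp
    finally show "mat_adjoint M $$ (i,j) = M $$ (i,j)" .
  qed (use M in auto)
  have quad: "Re ((M *\<^sub>v w) \<bullet>c w) = (cvnorm (W *\<^sub>v w))\<^sup>2" if w: "w \<in> carrier_vec n" for w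
  proof -
    have "(W *\<^sub>v w) \<bullet>c (W *\<^sub>v w) = (mat_adjoint W *\<^sub>v (W *\<^sub>v w)) \<bullet>c w"
      by (rule cscalar_adj[OF W], use W w in auto)
    also have "\<dots> = (M *\<^sub>v w) \<bullet>c w" unfolding M_def using Wh W w
      by (simp add: assoc_mult_mat_vec[OF Wh W w])
    finally show ?thesis unfolding cvnorm_alt using cscalar_self_real(2)[of "W *\<^sub>v w"] by simp
  qed
  have nv: "Re (w \<bullet>c w) = (cvnorm w)\<^sup>2" for w unfolding cvnorm_alt using cscalar_self_real(2)[of w] by simp
  define SV where "SV = singular_values W"
  have SVeq: "SV = (\<lambda>k. sqrt (Re k)) ` spectrum M"
    unfolding SV_def singular_values_def spectrum_def M_def by auto
  have fin: "finite SV" unfolding SVeq using card_finite_spectrum[OF M] by auto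
  have ne: "SV \<noteq> {}" unfolding SVeq using spectrum_non_empty[OF M n] by auto
  have pos: "\<forall>s\<in>SV. s > 0"
  proof
    fix s assume "s \<in> SV"
    then obtain k where k: "eigenvalue M k" and s: "s = sqrt (Re k)"
      unfolding SVeq spectrum_def by auto
    then obtain z where "eigenvector M z k" unfolding eigenvalue_def by auto
    hence z: "z \<in> carrier_vec n" and z0: "z \<noteq> 0\<^sub>v n" and Mz: "M *\<^sub>v z = k \<cdot>\<^sub>v z"
      using M unfolding eigenvector_def by auto
    have Wz0: "W *\<^sub>v z \<noteq> 0\<^sub>v n" using inj z z0 by blast
    have "Re ((M *\<^sub>v z) \<bullet>c z) = Re k * Re (z \<bullet>c z)"
    proof -
      have "Im (z \<bullet>c z) = 0" by (metis cscalar_self_real(1) Im_complex_of_real)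
      thus ?thesis unfolding Mz using z by simp
    qed
    moreover have "Re ((M *\<^sub>v z) \<bullet>c z) > 0" unfolding quad[OF z] nv[symmetric]
      by (rule cscalar_pos[OF _ Wz0], use W z in simp)
    moreover have "Re (z \<bullet>c z) > 0" by (rule cscalar_pos[OF z z0])
    ultimately have "Re k > 0" by (metis zero_less_mult_pos2)
    thus "s > 0" unfolding s by simp
  qed
  obtain a b where ab: "eigenvalue M a" "eigenvalue M b"
    "Re a * Re (v \<bullet>c v) \<le> Re ((M *\<^sub>v v) \<bullet>c v)" "Re ((M *\<^sub>v v) \<bullet>c v) \<le> Re b * Re (v \<bullet>c v)"
    using rayleigh[OF M herm n v] by auto
  have aSV: "sqrt (Re a) \<in> SV" "sqrt (Re b) \<in> SV" unfolding SVeq spectrum_def using ab by auto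
  have cv0: "cvnorm w \<ge> 0" for w unfolding cvnorm_alt using cscalar_self_real(2)[of w] by simp
  have "(cvnorm (W *\<^sub>v v))\<^sup>2 \<le> Re b * (cvnorm v)\<^sup>2" using ab(4) quad[OF v] nv by simp
  hence "sqrt ((cvnorm (W *\<^sub>v v))\<^sup>2) \<le> sqrt (Re b * (cvnorm v)\<^sup>2)" by (rule real_sqrt_le_mono)
  hence "cvnorm (W *\<^sub>v v) \<le> sqrt (Re b) * cvnorm v" using cv0 by (simp add: real_sqrt_mult)
  also have "\<dots> \<le> sigma_max W * cvnorm v" unfolding sigma_max_def SV_def[symmetric]
    by (rule mult_right_mono[OF Max_ge[OF fin aSV(2)] cv0])
  finally show "cvnorm (W *\<^sub>v v) \<le> sigma_max W * cvnorm v" .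
  have "Re a * (cvnorm v)\<^sup>2 \<le> (cvnorm (W *\<^sub>v v))\<^sup>2" using ab(3) quad[OF v] nv by simp
  hence "sqrt (Re a * (cvnorm v)\<^sup>2) \<le> sqrt ((cvnorm (W *\<^sub>v v))\<^sup>2)" by (rule real_sqrt_le_mono)
  hence 1: "sqrt (Re a) * cvnorm v \<le> cvnorm (W *\<^sub>v v)" using cv0 by (simp add: real_sqrt_mult)
  have "sigma_min W * cvnorm v \<le> sqrt (Re a) * cvnorm v" unfolding sigma_min_def SV_def[symmetric]
    by (rule mult_right_mono[OF Min_le[OF fin aSV(1)] cv0])
  with 1 show "sigma_min W * cvnorm v \<le> cvnorm (W *\<^sub>v v)" by simp
  show "sigma_min W > 0" unfolding sigma_min_def SV_def[symmetric] using fin ne pos by simp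
qed

lemma prod_diag_nonzero:
  fixes A :: "complex mat"
  assumes "A \<in> carrier_mat k k" "\<forall>i<k. A $$ (i,i) \<noteq> 0"
  shows "prod_list (diag_mat A) \<noteq> 0"
  using assms by (auto simp: diag_mat_def)

lemma Wp_props:
  fixes S :: "complex mat"
  assumes S: "S \<in> carrier_mat k k" and lt: "\<forall>i<k. \<forall>j<k. i < j \<longrightarrow> S $$ (i,j) = 0"
    and dg: "\<forall>i<k. S $$ (i,i) \<noteq> 0"
  shows "W_p nu S \<in> carrier_mat (nu+k) (nu+k)"
    "\<And>x. x \<in> carrier_vec (nu+k) \<Longrightarrow> W_p nu S *\<^sub>v x = 0\<^sub>v (nu+k) \<Longrightarrow> x = 0\<^sub>v (nu+k)"
proof -
  have dS: "det S \<noteq> 0" using det_lower_triangular[OF _ S] lt prod_diag_nonzero[OF S dg] by auto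
  have ex: "\<exists>B. B \<in> carrier_mat (dim_row S) (dim_row S) \<and> S * B = 1\<^sub>m (dim_row S) \<and> B * S = 1\<^sub>m (dim_row S)"
  proof (cases "mat_inverse S")
    case None
    from mat_inverse(1)[OF S None, of undefined] det_non_zero_imp_unit[OF S dS, of undefined]
    show ?thesis by blast
  next
    case (Some B)
    from mat_inverse(2)[OF S Some] S show ?thesis by auto
  qed
  define Si where "Si = mat_inv S"
  have Si_props: "Si \<in> carrier_mat k k" "S * Si = 1\<^sub>m k" "Si * S = 1\<^sub>m k"
    using someI_ex[OF ex] S unfolding Si_def mat_inv_def by auto
  have Si: "Si \<in> carrier_mat k k" by fact
  have dSi: "det Si \<noteq> 0" using det_mult[OF S Si] Si_props(2) by auto
  define d where "d = (\<lambda>i. Re ((Si * mat_adjoint Si) $$ (i,i)))"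
  have dpos: "d i > 0" if i: "i < k" for i
  proof -
    have "(Si * mat_adjoint Si) $$ (i,i) = row Si i \<bullet>c row Si i"
      using Si i by (simp add: scalar_prod_def row_def col_def)
    moreover have "row Si i \<noteq> 0\<^sub>v k"
    proof
      assume r: "row Si i = 0\<^sub>v k"
      have "(Si * S) $$ (i,i) = row Si i \<bullet> col S i" using Si S i by simp
      also have "\<dots> = 0" unfolding r using S i by (simp add: scalar_prod_def)
      finally show False using Si_props(3) i by simp
    qed
    ultimately show ?thesis unfolding d_def using cscalar_pos[of "row Si i" k] Si i by auto
  qed
  define Sg where "Sg = Sigma_mat S"
  have Sg_eq: "Sg = mat_diag k (\<lambda>i. complex_of_real (1 / sqrt (d i)))"
    unfolding Sg_def Sigma_mat_def d_def Si_def using S by simp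
  have Sg: "Sg \<in> carrier_mat k k" unfolding Sg_eq by simp
  have dSg: "det Sg \<noteq> 0"
  proof -
    have "det Sg = prod_list (diag_mat Sg)"
      by (rule det_lower_triangular[OF _ Sg], simp add: Sg_eq mat_diag_def)
    also have "\<dots> \<noteq> 0" using dpos by (intro prod_diag_nonzero[OF Sg], auto simp: Sg_eq mat_diag_def, fastforce)
    finally show ?thesis .
  qed
  have Weq: "W_p nu S = four_block_mat (1\<^sub>m nu) (0\<^sub>m nu k) (0\<^sub>m k nu) (Sg * Si)"
    unfolding W_p_def Sg_def Si_def using S by simp
  have SgSi: "Sg * Si \<in> carrier_mat k k" using Sg Si by simp
  show W: "W_p nu S \<in> carrier_mat (nu+k) (nu+k)" unfolding Weq using SgSi by auto
  have "det (W_p nu S) = det (1\<^sub>m nu) * det (Sg * Si)" unfolding Weq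
    by (rule det_four_block_mat_lower_left_zero[OF _ _ refl SgSi], auto)
  hence dW: "det (W_p nu S) \<noteq> 0" using det_mult[OF Sg Si] dSg dSi by simp
  fix x assume "x \<in> carrier_vec (nu+k)" "W_p nu S *\<^sub>v x = 0\<^sub>v (nu+k)"
  thus "x = 0\<^sub>v (nu+k)" using det_0_iff_vec_prod_zero[OF W] dW by blast
qed

theorem lemma1:
  fixes Nr Nt nu :: nat
    and H Q L P R S :: "complex mat"
    and X :: "complex set"
    and y xML xWLD :: "complex vec"
  assumes dims: "Nr \<ge> Nt" "Nt \<ge> 2"
    and H_carr: "H \<in> carrier_mat Nr Nt"
    and H_rank: "vec_space.rank Nr H = Nt"
    and Q_carr: "Q \<in> carrier_mat Nr Nt"
    and Q_orth: "mat_adjoint Q * Q = 1\<^sub>m Nt"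
    and L_carr: "L \<in> carrier_mat Nt Nt"
    and L_lower: "\<forall>i<Nt. \<forall>j<Nt. i < j \<longrightarrow> L $$ (i, j) = 0"
    and L_diag: "\<forall>i<Nt. L $$ (i, i) \<in> \<real> \<and> Re (L $$ (i, i)) > 0"
    and QL: "H = Q * L"
    and X_fin: "finite X" and X_ne: "X \<noteq> {}"
    and nu: "1 \<le> nu" "nu \<le> Nt - 1"
    and P_carr: "P \<in> carrier_mat nu nu"
    and R_carr: "R \<in> carrier_mat (Nt - nu) nu"
    and S_carr: "S \<in> carrier_mat (Nt - nu) (Nt - nu)"
    and L_part: "L = four_block_mat P (0\<^sub>m nu (Nt - nu)) R S"
    and y_carr: "y \<in> carrier_vec Nr"
    and xML: "xML \<in> const_vecs X Nt"
      "\<forall>x \<in> const_vecs X Nt.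
         cvnorm (mat_adjoint Q *\<^sub>v y - L *\<^sub>v xML) \<le> cvnorm (mat_adjoint Q *\<^sub>v y - L *\<^sub>v x)"
    and xWLD: "xWLD \<in> const_vecs X Nt"
      "\<forall>x \<in> const_vecs X Nt.
         cvnorm (W_p nu S *\<^sub>v (mat_adjoint Q *\<^sub>v y - L *\<^sub>v xWLD))
         \<le> cvnorm (W_p nu S *\<^sub>v (mat_adjoint Q *\<^sub>v y - L *\<^sub>v x))"
  shows "let yt = mat_adjoint Q *\<^sub>v y
         in cvnorm (yt - L *\<^sub>v xML) \<le> cvnorm (yt - L *\<^sub>v xWLD)
          \<and> cvnorm (yt - L *\<^sub>v xWLD) \<le> cond_num (W_p nu S) * cvnorm (yt - L *\<^sub>v xML)
          \<and> cvnorm (W_p nu S *\<^sub>v (yt - L *\<^sub>v xWLD)) \<le> sigma_max (W_p nu S) * cvnorm (yt - L *\<^sub>v xML)"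
proof -
  define k where "k = Nt - nu"
  have nuk: "nu + k = Nt" unfolding k_def using nu by simp
  have Sk: "S \<in> carrier_mat k k" using S_carr unfolding k_def .
  have Sidx: "S $$ (i,j) = L $$ (nu + i, nu + j)" if "i < k" "j < k" for i j
    unfolding L_part using that P_carr Sk by simp
  have lt: "\<forall>i<k. \<forall>j<k. i < j \<longrightarrow> S $$ (i,j) = 0"
    using Sidx L_lower nuk by auto
  have dg: "\<forall>i<k. S $$ (i,i) \<noteq> 0"
  proof (intro allI impI)
    fix i assume i: "i < k"
    have "Re (L $$ (nu + i, nu + i)) > 0" using L_diag nuk i by auto
    thus "S $$ (i,i) \<noteq> 0" using Sidx[OF i i] by auto
  qed
  note Wp = Wp_props[OF Sk lt dg, where nu = nu, unfolded nuk]
  define W where "W = W_p nu S"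
  have W: "W \<in> carrier_mat Nt Nt" unfolding W_def by (rule Wp(1))
  have inj: "\<forall>x\<in>carrier_vec Nt. W *\<^sub>v x = 0\<^sub>v Nt \<longrightarrow> x = 0\<^sub>v Nt"
    unfolding W_def using Wp(2) by blast
  have Nt0: "0 < Nt" using dims by simp
  note sv = sv_bounds[OF W Nt0 inj]
  define yt where "yt = mat_adjoint Q *\<^sub>v y"
  have yt: "yt \<in> carrier_vec Nt" unfolding yt_def
    using mult_mat_vec_carrier[OF adj_carrier[OF Q_carr] y_carr] .
  have ec: "yt - L *\<^sub>v x \<in> carrier_vec Nt" if "x \<in> const_vecs X Nt" for x
    using that yt L_carr unfolding const_vecs_def by auto
  define eM where "eM = yt - L *\<^sub>v xML"
  define eW where "eW = yt - L *\<^sub>v xWLD"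
  have eM: "eM \<in> carrier_vec Nt" unfolding eM_def by (rule ec[OF xML(1)])
  have eW: "eW \<in> carrier_vec Nt" unfolding eW_def by (rule ec[OF xWLD(1)])
  have 1: "cvnorm eM \<le> cvnorm eW" unfolding eM_def eW_def yt_def using xML(2) xWLD(1) by blast
  have 2: "cvnorm (W *\<^sub>v eW) \<le> cvnorm (W *\<^sub>v eM)" unfolding eM_def eW_def yt_def W_def
    using xWLD(2) xML(1) by blast
  have 3: "cvnorm (W *\<^sub>v eW) \<le> sigma_max W * cvnorm eM" using 2 sv(1)[OF eM] by linarith
  have "sigma_min W * cvnorm eW \<le> sigma_max W * cvnorm eM" using sv(2)[OF eW] 3 by linarith
  hence 4: "cvnorm eW \<le> cond_num W * cvnorm eM" unfolding cond_num_def using sv(3)[OF eM]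
    by (simp add: field_simps)
  show ?thesis unfolding Let_def yt_def[symmetric] eM_def[symmetric] eW_def[symmetric] W_def[symmetric]
    using 1 3 4 by blast
qed

end
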